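(* For all $a, b \in \mathbb{N}$, $R_\mathrm{ord}(K_a, S_b^\mathrm{sc}) = 1 + (a-1)(b-1)$.
   Context: All graphs are finite, simple and undirected, and a graph of order $n$ has vertex set $\{0,1,\ldots,n-1\}$; $K_n$ is the complete graph on $\{0,\ldots,n-1\}$. A $2$-edge-coloring of $K_n$ assigns each edge a color in $\{1,2\}$. For a graph $H$ and such a coloring, an embedding of $H$ in color $j$ is an injective map $\varphi\colon V(H)\to V(K_n)$ such that for every edge $uv$ of $H$ the edge $\{\varphi(u),\varphi(v)\}$ has color $j$; it is increasing if $\varphi(0)<\cdots<\varphi(|H|-1)$. The ordered Ramsey number $R_\mathrm{ord}(H_1,H_2)$ is the smallest $n$ such that every $2$-edge-coloring of $K_n$ admits an increasing embedding of $H_1$ in color $1$ or an increasing embedding of $H_2$ in color $2$. The start-central star $S_n^\mathrm{sc}$ is the graph of order $n$ whose edges are exactly $\{0,v\}$ for $1\le v\le n-1$. *)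

theory Defs
  imports Main
begin

text \<open>A graph of order n is given by its order n together with an edge set
  E :: nat set set of 2-element subsets of {0..<n}. A 2-edge-coloring of K_n
  is a function c from edges (2-element sets) to colors, with c e \<in> {1,2}
  for every edge e of K_n (values on non-edges are irrelevant).\<close>

definition complete_graph :: "nat \<Rightarrow> nat set set" where
  "complete_graph n = {e. \<exists>u v. u < n \<and> v < n \<and> u \<noteq> v \<and> e = {u, v}}"

definition star_sc :: "nat \<Rightarrow> nat set set" where
  "star_sc n = {e. \<exists>v. 1 \<le> v \<and> v < n \<and> e = {0, v}}"

definition two_coloring :: "nat \<Rightarrow> (nat set \<Rightarrow> nat) \<Rightarrow> bool" where
  "two_coloring n c \<longleftrightarrow> (\<forall>e \<in> complete_graph n. c e \<in> {1, 2})"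

definition inc_embedding ::
  "nat \<Rightarrow> nat set set \<Rightarrow> nat \<Rightarrow> (nat set \<Rightarrow> nat) \<Rightarrow> nat \<Rightarrow> (nat \<Rightarrow> nat) \<Rightarrow> bool" where
  "inc_embedding k E n c j \<phi> \<longleftrightarrow>
     inj_on \<phi> {0..<k} \<and> (\<forall>i<k. \<phi> i < n) \<and> strict_mono_on {0..<k} \<phi> \<and>
     (\<forall>e \<in> E. c (\<phi> ` e) = j)"

definition ord_arrows :: "nat \<Rightarrow> nat \<Rightarrow> nat set set \<Rightarrow> nat \<Rightarrow> nat set set \<Rightarrow> bool" where
  "ord_arrows n k1 E1 k2 E2 \<longleftrightarrow>
     (\<forall>c. two_coloring n c \<longrightarrow>
        (\<exists>\<phi>. inc_embedding k1 E1 n c 1 \<phi>) \<or> (\<exists>\<phi>. inc_embedding k2 E2 n c 2 \<phi>))"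

definition R_ord :: "nat \<Rightarrow> nat set set \<Rightarrow> nat \<Rightarrow> nat set set \<Rightarrow> nat" where
  "R_ord k1 E1 k2 E2 = (LEAST n. ord_arrows n k1 E1 k2 E2)"

end

theory Submission
  imports Defs
begin

lemma star_from_set:
  fixes n b v :: nat and W :: "nat set" and c
  assumes W: "W \<subseteq> {w. v < w \<and> w < n \<and> c {v, w} = 2}" and v: "v < n"
    and card: "card W \<ge> b - 1" and b: "b \<ge> 1"
  shows "\<exists>\<phi>. inc_embedding b (star_sc b) n c 2 \<phi>"
proof -
  have fin: "finite W" using W by (rule finite_subset) auto
  define xs where "xs = sorted_list_of_set W"
  have len: "length xs = card W" unfolding xs_def by simp
  have setxs: "set xs = W" unfolding xs_def using fin by simp
  have sw: "sorted_wrt (<) xs" unfolding xs_def by (rule strict_sorted_list_of_set)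
  define \<phi> where "\<phi> i = (if i = 0 then v else xs ! (i - 1))" for i
  have inW: "xs ! (i - 1) \<in> W" if "0 < i" "i < b" for i
    using that len card setxs by (metis diff_less_mono le_trans less_le_trans nat_less_le nth_mem One_nat_def Suc_leI Suc_pred)
  have sm: "strict_mono_on {0..<b} \<phi>"
  proof (rule strict_mono_onI)
    fix i j assume ij: "i \<in> {0..<b}" "j \<in> {0..<b}" "i < j"
    show "\<phi> i < \<phi> j"
    proof (cases "i = 0")
      case True
      then show ?thesis using inW[of j] ij W unfolding \<phi>_def by auto
    next
      case False
      have "xs ! (i - 1) < xs ! (j - 1)"
        using sorted_wrt_nth_less[OF sw, of "i - 1" "j - 1"] ij False len card by auto
      then show ?thesis using False ij unfolding \<phi>_def by auto
    qed
  qed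
  have lt: "\<forall>i<b. \<phi> i < n"
    using inW W v unfolding \<phi>_def by auto
  have col: "\<forall>e \<in> star_sc b. c (\<phi> ` e) = 2"
  proof
    fix e assume "e \<in> star_sc b"
    then obtain u where u: "1 \<le> u" "u < b" "e = {0, u}" unfolding star_sc_def by auto
    have "\<phi> ` e = {v, xs ! (u - 1)}" using u unfolding \<phi>_def by auto
    then show "c (\<phi> ` e) = 2" using inW[of u] u W by auto
  qed
  show ?thesis unfolding inc_embedding_def
    using sm lt col strict_mono_on_imp_inj_on by blast
qed

lemma greedy:
  fixes n b :: nat and c
  assumes tc: "two_coloring n c"
    and few: "\<forall>v<n. card {w. v < w \<and> w < n \<and> c {v, w} = 2} < b - 1"
  shows "C \<subseteq> {0..<n} \<Longrightarrow> card C \<ge> 1 + k * (b - 1) \<Longrightarrow>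
    \<exists>\<psi>. (\<forall>i<Suc k. \<psi> i \<in> C) \<and> strict_mono_on {0..<Suc k} \<psi> \<and>
        (\<forall>i j. i < Suc k \<longrightarrow> j < Suc k \<longrightarrow> i \<noteq> j \<longrightarrow> c {\<psi> i, \<psi> j} = 1)"
proof (induction k arbitrary: C)
  case 0
  then have "C \<noteq> {}" by auto
  then obtain x where "x \<in> C" by auto
  then show ?case by (intro exI[of _ "\<lambda>_. x"]) (auto simp: strict_mono_on_def)
next
  case (Suc k)
  have finC: "finite C" using Suc.prems(1) finite_subset by blast
  have ne: "C \<noteq> {}" using Suc.prems(2) by auto
  define v where "v = Min C"
  have vC: "v \<in> C" using finC ne v_def by simp
  have vmin: "\<And>w. w \<in> C \<Longrightarrow> v \<le> w" using finC v_def by simp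
  have vn: "v < n" using vC Suc.prems(1) by auto
  define W where "W = {w. v < w \<and> w < n \<and> c {v, w} = 2}"
  define C' where "C' = {w \<in> C. v < w \<and> c {v, w} = 1}"
  have finW: "finite W" unfolding W_def by auto
  have finC': "finite C'" using finC unfolding C'_def by auto
  have sub: "C - {v} \<subseteq> C' \<union> W"
  proof
    fix w assume w: "w \<in> C - {v}"
    then have "v < w" "w < n" using vmin Suc.prems(1) by (auto simp: le_less)
    moreover have "{v, w} \<in> complete_graph n" using w vn \<open>w < n\<close> unfolding complete_graph_def by auto
    then have "c {v, w} \<in> {1, 2}" using tc unfolding two_coloring_def by auto
    ultimately show "w \<in> C' \<union> W" using w unfolding C'_def W_def by auto
  qed
  have "card C - 1 \<le> card C' + card W"
  proof -
    have "card (C - {v}) \<le> card (C' \<union> W)" using sub finC' finW by (intro card_mono) auto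
    also have "\<dots> \<le> card C' + card W" by (rule card_Un_le)
    finally show ?thesis using vC finC by simp
  qed
  moreover have "card W < b - 1" using few vn unfolding W_def by auto
  ultimately have cardC': "card C' \<ge> 1 + k * (b - 1)" using Suc.prems(2) by simp
  have C'sub: "C' \<subseteq> {0..<n}" using Suc.prems(1) unfolding C'_def by auto
  obtain \<psi> where \<psi>C: "\<forall>i<Suc k. \<psi> i \<in> C'" and \<psi>sm: "strict_mono_on {0..<Suc k} \<psi>"
    and \<psi>c: "\<forall>i j. i < Suc k \<longrightarrow> j < Suc k \<longrightarrow> i \<noteq> j \<longrightarrow> c {\<psi> i, \<psi> j} = 1"
    using Suc.IH[OF C'sub cardC'] by blast
  define \<phi> where "\<phi> i = (if i = 0 then v else \<psi> (i - 1))" for i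
  have A: "\<forall>i<Suc (Suc k). \<phi> i \<in> C" using \<psi>C vC unfolding \<phi>_def C'_def by auto
  have B: "strict_mono_on {0..<Suc (Suc k)} \<phi>"
  proof (rule strict_mono_onI)
    fix i j assume ij: "i \<in> {0..<Suc (Suc k)}" "j \<in> {0..<Suc (Suc k)}" "i < j"
    show "\<phi> i < \<phi> j"
    proof (cases "i = 0")
      case True
      then show ?thesis using \<psi>C[rule_format, of "j - 1"] ij unfolding \<phi>_def C'_def by auto
    next
      case False
      have "\<psi> (i - 1) < \<psi> (j - 1)"
      proof -
        have "i - 1 < j - 1" "j - 1 < Suc k" using ij False by auto
        then show ?thesis using \<psi>sm unfolding strict_mono_on_def by auto
      qed
      then show ?thesis using False ij unfolding \<phi>_def by auto
    qed
  qed
  have D: "\<forall>i j. i < Suc (Suc k) \<longrightarrow> j < Suc (Suc k) \<longrightarrow> i \<noteq> j \<longrightarrow> c {\<phi> i, \<phi> j} = 1"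
  proof (intro allI impI)
    fix i j assume ij: "i < Suc (Suc k)" "j < Suc (Suc k)" "i \<noteq> j"
    show "c {\<phi> i, \<phi> j} = 1"
    proof (cases "i = 0")
      case True
      then show ?thesis using \<psi>C[rule_format, of "j - 1"] ij unfolding \<phi>_def C'_def by auto
    next
      case F: False
      show ?thesis
      proof (cases "j = 0")
        case True
        then show ?thesis using \<psi>C[rule_format, of "i - 1"] ij unfolding \<phi>_def C'_def
          by (auto simp: insert_commute)
      next
        case False
        then show ?thesis using F \<psi>c[rule_format, of "i - 1" "j - 1"] ij unfolding \<phi>_def by auto
      qed
    qed
  qed
  show ?case using A B D by blast
qed

lemma upper:
  fixes a b n :: nat
  assumes "a \<ge> 1" "b \<ge> 1" "n \<ge> 1 + (a - 1) * (b - 1)"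
  shows "ord_arrows n a (complete_graph a) b (star_sc b)"
  unfolding ord_arrows_def
proof (intro allI impI)
  fix c assume tc: "two_coloring n c"
  show "(\<exists>\<phi>. inc_embedding a (complete_graph a) n c 1 \<phi>) \<or> (\<exists>\<phi>. inc_embedding b (star_sc b) n c 2 \<phi>)"
  proof (cases "\<forall>v<n. card {w. v < w \<and> w < n \<and> c {v, w} = 2} < b - 1")
    case False
    then obtain v where "v < n" "card {w. v < w \<and> w < n \<and> c {v, w} = 2} \<ge> b - 1" by auto
    then show ?thesis using star_from_set[OF order_refl _ _ assms(2)] by blast
  next
    case True
    obtain \<psi> where \<psi>C: "\<forall>i<Suc (a - 1). \<psi> i \<in> {0..<n}" and \<psi>sm: "strict_mono_on {0..<Suc (a - 1)} \<psi>"
      and \<psi>c: "\<forall>i j. i < Suc (a - 1) \<longrightarrow> j < Suc (a - 1) \<longrightarrow> i \<noteq> j \<longrightarrow> c {\<psi> i, \<psi> j} = 1"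
      using greedy[OF tc True, of "{0..<n}" "a - 1"] assms(3) by auto
    have sa: "Suc (a - 1) = a" using assms(1) by simp
    have "inc_embedding a (complete_graph a) n c 1 \<psi>"
      unfolding inc_embedding_def
    proof (intro conjI)
      show "strict_mono_on {0..<a} \<psi>" using \<psi>sm sa by simp
      then show "inj_on \<psi> {0..<a}" by (rule strict_mono_on_imp_inj_on)
      show "\<forall>i<a. \<psi> i < n" using \<psi>C sa by auto
      show "\<forall>e\<in>complete_graph a. c (\<psi> ` e) = 1"
        using \<psi>c sa unfolding complete_graph_def by auto
    qed
    then show ?thesis by blast
  qed
qed

lemma lower:
  fixes a b m :: nat
  assumes "a \<ge> 1" "b \<ge> 1" "m < 1 + (a - 1) * (b - 1)"
  shows "\<not> ord_arrows m a (complete_graph a) b (star_sc b)"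
proof
  assume arr: "ord_arrows m a (complete_graph a) b (star_sc b)"
  define d where "d = b - 1"
  define c :: "nat set \<Rightarrow> nat" where
    "c S = (if \<exists>u v. S = {u, v} \<and> u div d = v div d then 2 else 1)" for S
  have c2: "c {x, y} = 2 \<Longrightarrow> x div d = y div d" for x y
    unfolding c_def by (auto split: if_splits simp: doubleton_eq_iff)
  have c1: "c {x, y} = 1 \<Longrightarrow> x div d \<noteq> y div d" for x y
    unfolding c_def by (auto split: if_splits)
  have "two_coloring m c" unfolding two_coloring_def c_def by auto
  then have "(\<exists>\<phi>. inc_embedding a (complete_graph a) m c 1 \<phi>) \<or> (\<exists>\<phi>. inc_embedding b (star_sc b) m c 2 \<phi>)"
    using arr unfolding ord_arrows_def by blast
  then show False
  proof
    assume "\<exists>\<phi>. inc_embedding a (complete_graph a) m c 1 \<phi>"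
    then obtain \<phi> where lt: "\<forall>i<a. \<phi> i < m" and col: "\<forall>e\<in>complete_graph a. c (\<phi> ` e) = 1"
      unfolding inc_embedding_def by blast
    have "inj_on (\<lambda>i. \<phi> i div d) {0..<a}"
    proof (rule inj_onI)
      fix i j assume "i \<in> {0..<a}" "j \<in> {0..<a}" "\<phi> i div d = \<phi> j div d"
      moreover have "i \<noteq> j \<Longrightarrow> c (\<phi> ` {i, j}) = 1"
      proof -
        assume "i \<noteq> j"
        then have "{i, j} \<in> complete_graph a" using calculation unfolding complete_graph_def by auto
        then show ?thesis using col by blast
      qed
      ultimately show "i = j" using c1 by fastforce
    qed
    moreover have "(\<lambda>i. \<phi> i div d) ` {0..<a} \<subseteq> {0..<a - 1}"
    proof
      fix x assume "x \<in> (\<lambda>i. \<phi> i div d) ` {0..<a}"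
      then obtain i where i: "i < a" "x = \<phi> i div d" by auto
      have "\<phi> i < (a - 1) * d" using lt i assms(3) unfolding d_def by fastforce
      then have "d > 0" by (cases "d = 0") auto
      then show "x \<in> {0..<a - 1}" using i \<open>\<phi> i < (a - 1) * d\<close>
        by (simp add: div_less_iff_less_mult)
    qed
    ultimately have "card {0..<a} \<le> card {0..<a - 1}" by (metis card_inj_on_le finite_atLeastLessThan)
    then show False using assms(1) by simp
  next
    assume "\<exists>\<phi>. inc_embedding b (star_sc b) m c 2 \<phi>"
    then obtain \<phi> where inj: "inj_on \<phi> {0..<b}" and lt: "\<forall>i<b. \<phi> i < m"
      and col: "\<forall>e\<in>star_sc b. c (\<phi> ` e) = 2"
      unfolding inc_embedding_def by blast
    have d0: "d > 0"
    proof (rule ccontr)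
      assume "\<not> d > 0"
      then have "m = 0" using assms(3) unfolding d_def by simp
      then show False using lt assms(2) by auto
    qed
    define B where "B = \<phi> 0 div d"
    have "\<phi> ` {0..<b} \<subseteq> {B * d..<B * d + d}"
    proof
      fix x assume "x \<in> \<phi> ` {0..<b}"
      then obtain i where i: "i < b" "x = \<phi> i" by auto
      have "\<phi> i div d = B"
      proof (cases "i = 0")
        case True then show ?thesis unfolding B_def by simp
      next
        case False
        then have "{0, i} \<in> star_sc b" using i unfolding star_sc_def
          by (intro CollectI exI[of _ i]) auto
        then have "c {\<phi> 0, \<phi> i} = 2" using col by auto
        then show ?thesis using c2 unfolding B_def by metis
      qed
      moreover have "\<phi> i div d * d + \<phi> i mod d = \<phi> i" by (rule div_mult_mod_eq)
      moreover have "\<phi> i mod d < d" using d0 by simp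
      ultimately show "x \<in> {B * d..<B * d + d}" using i by (simp add: mult.commute)
    qed
    then have "card (\<phi> ` {0..<b}) \<le> d" using card_mono[of "{B * d..<B * d + d}"] by fastforce
    then show False using card_image[OF inj] unfolding d_def using assms(2) by simp
  qed
qed

theorem theorem4p24:
  fixes a b :: nat
  assumes "a \<ge> 1" and "b \<ge> 1"
  shows "R_ord a (complete_graph a) b (star_sc b) = 1 + (a - 1) * (b - 1)"
  unfolding R_ord_def
  by (rule Least_equality) (use upper[OF assms] lower[OF assms] in \<open>auto simp: not_less[symmetric]\<close>)

end
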